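(* Let $d\ge1$ and $t\ge1$ be integers, $M\ge1$, $f:[0,1]^d\to\mathbb{R}$ any function, and let $b$, $a_i$, $b_{r,i}$, $\hat g_i$ be as produced by the construction described in the context. Then: (a) for any $i\in\{0,\dots,(t+1)^d-1\}$ and $j\in\{1,\dots,(t+1)^d-1\}$, $\hat g_j(\boldsymbol\pi^i/t)=a_j/t$ if $\pi^j_r\le\pi^i_r$ for all $r\in\{1,\dots,d\}$, and $\hat g_j(\boldsymbol\pi^i/t)=0$ otherwise; (b) for every $i\in\{1,\dots,(t+1)^d-1\}$, $b+\sum_{j=1}^{i}\hat g_j(\boldsymbol\pi^i/t)=f(\boldsymbol\pi^i/t)$.
   Context: Let $\sigma(z)=\max(z,0)$ and $k=(t+1)^d$. For an integer $0\le i\le k-1$ let $\boldsymbol\pi^i=(\pi^i_1,\dots,\pi^i_d)$ be its base-$(t+1)$ digit vector, i.e. $0\le\pi^i_r\le t$ and $i=\sum_{r=1}^d\pi^i_r(t+1)^{d-r}$. For parameters $a_j,b_{1,j},\dots,b_{d,j}$ define $\hat g_j(\mathbf{x})=a_j\,\sigma\big(\sum_{r=1}^d -M\sigma(-x_r+b_{r,j})+\tfrac1t\big)$. Construction: set $b=f(\mathbf{0})$; for $i=1,\dots,k-1$ in order: let $\hat y=b+\sum_{j=1}^{i-1}\hat g_j(\boldsymbol\pi^i/t)$, set $b_{r,i}=\pi^i_r/t$ for $r=1,\dots,d$, and set $a_i=t\big(f(\boldsymbol\pi^i/t)-\hat y\big)$. *)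

theory Defs
  imports Complex_Main
begin

definition relu :: "real \<Rightarrow> real" where
  "relu z = max z 0"

text \<open>r-th base-(t+1) digit (r = 1..d, most significant first) of i:
  i = sum_{r=1}^d pi_r (t+1)^(d-r).\<close>
definition digit :: "nat \<Rightarrow> nat \<Rightarrow> nat \<Rightarrow> nat \<Rightarrow> nat" where
  "digit d t i r = (i div (t+1)^(d-r)) mod (t+1)"

text \<open>Grid point pi^i / t in [0,1]^d; points of R^d are functions nat => real
  with coordinates indexed by 1..d (other coordinates set to 0).\<close>
definition gridpt :: "nat \<Rightarrow> nat \<Rightarrow> nat \<Rightarrow> (nat \<Rightarrow> real)" where
  "gridpt d t i = (\<lambda>r. if 1 \<le> r \<and> r \<le> d then real (digit d t i r) / real t else 0)"

text \<open>ghat_j(x) = a_j * sigma(sum_{r=1}^d -M sigma(-x_r + b_{r,j}) + 1/t),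
  where bv r = b_{r,j}.\<close>
definition ghat :: "nat \<Rightarrow> nat \<Rightarrow> real \<Rightarrow> real \<Rightarrow> (nat \<Rightarrow> real) \<Rightarrow> (nat \<Rightarrow> real) \<Rightarrow> real" where
  "ghat d t M a bv x = a * relu ((\<Sum>r=1..d. - M * relu (- x r + bv r)) + 1 / real t)"

end

theory Submission
  imports Defs
begin

lemma key:
  fixes p q :: "nat \<Rightarrow> nat" and t :: nat and M a :: real
  assumes t: "t \<ge> 1" and M: "M \<ge> 1"
  shows "a * relu ((\<Sum>r=1..d. - M * relu (- (real (p r) / real t) + real (q r) / real t)) + 1 / real t)
    = (if (\<forall>r\<in>{1..d}. q r \<le> p r) then a / real t else 0)"
proof (cases "\<forall>r\<in>{1..d}. q r \<le> p r")
  case True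
  have "\<forall>r\<in>{1..d}. relu (- (real (p r) / real t) + real (q r) / real t) = 0"
  proof
    fix r assume "r \<in> {1..d}"
    with True have "real (q r) \<le> real (p r)" by simp
    hence "real (q r) / real t \<le> real (p r) / real t" using t by (simp add: divide_right_mono)
    thus "relu (- (real (p r) / real t) + real (q r) / real t) = 0" by (simp add: relu_def)
  qed
  hence "(\<Sum>r=1..d. - M * relu (- (real (p r) / real t) + real (q r) / real t)) = 0" by simp
  moreover have "relu (1 / real t) = 1 / real t" using t by (simp add: relu_def)
  ultimately show ?thesis using True by simp
next
  case False
  then obtain r0 where r0: "r0 \<in> {1..d}" "q r0 > p r0" by auto
  let ?g = "\<lambda>r. - M * relu (- (real (p r) / real t) + real (q r) / real t)"
  have nonpos: "?g r \<le> 0" for r using M by (simp add: relu_def mult_nonneg_nonneg)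
  have "real (q r0) \<ge> real (p r0) + 1" using r0 by simp
  hence "real (q r0) / real t \<ge> (real (p r0) + 1) / real t" using t by (simp add: divide_right_mono)
  hence "- (real (p r0) / real t) + real (q r0) / real t \<ge> 1 / real t" by (simp add: add_divide_distrib)
  hence rl: "relu (- (real (p r0) / real t) + real (q r0) / real t) \<ge> 1 / real t"
    by (simp add: relu_def)
  have "M * relu (- (real (p r0) / real t) + real (q r0) / real t) \<ge> 1 * (1 / real t)"
    using rl M t by (intro mult_mono) auto
  hence g0: "?g r0 \<le> - (1 / real t)" by simp
  have "(\<Sum>r=1..d. ?g r) = ?g r0 + (\<Sum>r\<in>{1..d}-{r0}. ?g r)"
    using r0 by (simp add: sum.remove)
  also have "\<dots> \<le> ?g r0" using nonpos by (simp add: sum_nonpos)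
  finally have "(\<Sum>r=1..d. ?g r) + 1 / real t \<le> 0" using g0 by simp
  hence "relu ((\<Sum>r=1..d. ?g r) + 1 / real t) = 0" by (simp add: relu_def)
  thus ?thesis by (subst if_not_P[OF False]) simp
qed

lemma partA:
  fixes d t :: nat and M :: real and a :: "nat \<Rightarrow> real" and bb :: "nat \<Rightarrow> nat \<Rightarrow> real"
  assumes "t \<ge> 1" and "M \<ge> 1"
    and hbb: "\<forall>i\<in>{1..<(t+1)^d}. \<forall>r\<in>{1..d}. bb r i = real (digit d t i r) / real t"
    and j: "j \<in> {1..<(t+1)^d}"
  shows "ghat d t M (a j) (\<lambda>r. bb r j) (gridpt d t i) =
              (if (\<forall>r\<in>{1..d}. digit d t j r \<le> digit d t i r) then a j / real t else 0)"
proof -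
  have "(\<Sum>r=1..d. - M * relu (- gridpt d t i r + bb r j)) =
        (\<Sum>r=1..d. - M * relu (- (real (digit d t i r) / real t) + real (digit d t j r) / real t))"
    using hbb j by (intro sum.cong) (auto simp: gridpt_def)
  thus ?thesis unfolding ghat_def
    using key[OF assms(1,2), where p="digit d t i" and q="digit d t j" and a="a j" and d=d] by simp
qed

theorem propositionA5:
  fixes d t :: nat and M :: real and f :: "(nat \<Rightarrow> real) \<Rightarrow> real"
    and b :: real and a :: "nat \<Rightarrow> real" and bb :: "nat \<Rightarrow> nat \<Rightarrow> real"
  assumes "d \<ge> 1" and "t \<ge> 1" and "M \<ge> 1"
    and hb: "b = f (gridpt d t 0)"
    and hbb: "\<forall>i\<in>{1..<(t+1)^d}. \<forall>r\<in>{1..d}. bb r i = real (digit d t i r) / real t"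
    and ha: "\<forall>i\<in>{1..<(t+1)^d}. a i = real t * (f (gridpt d t i)
               - (b + (\<Sum>j=1..<i. ghat d t M (a j) (\<lambda>r. bb r j) (gridpt d t i))))"
  shows "(\<forall>i<(t+1)^d. \<forall>j\<in>{1..<(t+1)^d}.
            ghat d t M (a j) (\<lambda>r. bb r j) (gridpt d t i) =
              (if (\<forall>r\<in>{1..d}. digit d t j r \<le> digit d t i r) then a j / real t else 0))
       \<and> (\<forall>i\<in>{1..<(t+1)^d}.
            b + (\<Sum>j=1..i. ghat d t M (a j) (\<lambda>r. bb r j) (gridpt d t i)) = f (gridpt d t i))"
proof (intro conjI ballI allI impI)
  fix i j assume "i < (t+1)^d" "j \<in> {1..<(t+1)^d}"
  thus "ghat d t M (a j) (\<lambda>r. bb r j) (gridpt d t i) =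
              (if (\<forall>r\<in>{1..d}. digit d t j r \<le> digit d t i r) then a j / real t else 0)"
    using partA[OF assms(2,3) hbb] by blast
next
  fix i assume i: "i \<in> {1..<(t+1)^d}"
  have gi: "ghat d t M (a i) (\<lambda>r. bb r i) (gridpt d t i) = a i / real t"
    using partA[OF assms(2,3) hbb i, of a i] by simp
  have "(\<Sum>j=1..i. ghat d t M (a j) (\<lambda>r. bb r j) (gridpt d t i)) =
        (\<Sum>j=1..<i. ghat d t M (a j) (\<lambda>r. bb r j) (gridpt d t i)) + a i / real t"
    using i gi by (simp add: sum.last_plus atLeastLessThanSuc_atLeastAtMost[symmetric]
        atLeastLessThanSuc sum.atLeast_Suc_lessThan_Suc_shift del: sum.op_ivl_Suc)
  moreover have "a i / real t = f (gridpt d t i)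
               - (b + (\<Sum>j=1..<i. ghat d t M (a j) (\<lambda>r. bb r j) (gridpt d t i)))"
    using ha i assms(2) by simp
  ultimately show "b + (\<Sum>j=1..i. ghat d t M (a j) (\<lambda>r. bb r j) (gridpt d t i)) = f (gridpt d t i)"
    by simp
qed

end
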